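(* Let $S$ be a nonempty complete lattice and let $F:S\to 2^S$ be a V-ascending correspondence. Suppose that for every $x\in S$, the value $F(x)$, with the order induced from $S$, is a nonempty complete lattice. Then $\mathrm{Fix}(F)=\{s\in S: s\in F(s)\}$, with the order induced from $S$, is a nonempty complete lattice.
   Context: A poset $P$ is a complete lattice if every nonempty subset of $P$ has a supremum and an infimum in $P$ (this is an intrinsic property of $P$; for $F(x)$ the suprema/infima are taken within $F(x)$, not necessarily agreeing with those in $S$). For a lattice $S$ and a correspondence $F:S\to 2^S$: $F$ is lower V-ascending if for all $x<x'$ in $S$ (strict inequality), every $y\in F(x)$ and every $y'\in F(x')$, one has $y\wedge y'\in F(x)$; $F$ is upper V-ascending if under the same conditions $y\vee y'\in F(x')$; $F$ is V-ascending if it is both upper and lower V-ascending. *)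

theory Defs
  imports Main
begin

definition is_sup_in :: "'a::order set \<Rightarrow> 'a set \<Rightarrow> 'a \<Rightarrow> bool" where
  "is_sup_in P A s \<longleftrightarrow> s \<in> P \<and> (\<forall>a\<in>A. a \<le> s) \<and> (\<forall>u\<in>P. (\<forall>a\<in>A. a \<le> u) \<longrightarrow> s \<le> u)"

definition is_inf_in :: "'a::order set \<Rightarrow> 'a set \<Rightarrow> 'a \<Rightarrow> bool" where
  "is_inf_in P A s \<longleftrightarrow> s \<in> P \<and> (\<forall>a\<in>A. s \<le> a) \<and> (\<forall>u\<in>P. (\<forall>a\<in>A. u \<le> a) \<longrightarrow> u \<le> s)"

definition complete_sublattice_order :: "'a::order set \<Rightarrow> bool" where
  "complete_sublattice_order P \<longleftrightarrow>
     (\<forall>A. A \<subseteq> P \<and> A \<noteq> {} \<longrightarrow> (\<exists>s. is_sup_in P A s) \<and> (\<exists>i. is_inf_in P A i))"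

definition lower_V_ascending :: "('a::lattice \<Rightarrow> 'a set) \<Rightarrow> bool" where
  "lower_V_ascending F \<longleftrightarrow>
     (\<forall>x x' y y'. x < x' \<longrightarrow> y \<in> F x \<longrightarrow> y' \<in> F x' \<longrightarrow> inf y y' \<in> F x)"

definition upper_V_ascending :: "('a::lattice \<Rightarrow> 'a set) \<Rightarrow> bool" where
  "upper_V_ascending F \<longleftrightarrow>
     (\<forall>x x' y y'. x < x' \<longrightarrow> y \<in> F x \<longrightarrow> y' \<in> F x' \<longrightarrow> sup y y' \<in> F x')"

definition V_ascending :: "('a::lattice \<Rightarrow> 'a set) \<Rightarrow> bool" where
  "V_ascending F \<longleftrightarrow> lower_V_ascending F \<and> upper_V_ascending F"

definition Fix :: "('a \<Rightarrow> 'a set) \<Rightarrow> 'a set" where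
  "Fix F = {s. s \<in> F s}"

end

theory Submission
  imports Defs
begin

lemma csoD:
  assumes "complete_sublattice_order P" "A \<subseteq> P" "A \<noteq> {}"
  shows "(\<exists>s. is_sup_in P A s) \<and> (\<exists>i. is_inf_in P A i)"
  using assms unfolding complete_sublattice_order_def by blast

lemma sup_part:
  fixes F :: "'a::lattice \<Rightarrow> 'a set"
  assumes cU: "complete_sublattice_order (UNIV :: 'a set)"
    and up: "upper_V_ascending F" and low: "lower_V_ascending F"
    and cF: "\<And>x. F x \<noteq> {} \<and> complete_sublattice_order (F x)"
    and AF: "A \<subseteq> Fix F" and aA: "is_sup_in UNIV A a"
  shows "\<exists>s. is_sup_in (Fix F) A s"
proof -
  have sa: "\<And>s. s \<in> A \<Longrightarrow> s \<le> a" using aA unfolding is_sup_in_def by auto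
  have sF: "\<And>s. s \<in> A \<Longrightarrow> s \<in> F s" using AF unfolding Fix_def by auto
  have G: "\<exists>c. c \<in> F x \<and> a \<le> c \<and> (\<forall>y\<in>F x. a \<le> y \<longrightarrow> c \<le> y)" if ax: "a \<le> x" for x
  proof -
    obtain t where t: "is_sup_in (F x) (F x) t"
      using cF[of x] unfolding complete_sublattice_order_def by blast
    have "s \<le> t" if sA: "s \<in> A" for s
    proof (cases "s < x")
      case True
      have "sup s t \<in> F x" using up True sF[OF sA] t unfolding upper_V_ascending_def is_sup_in_def by blast
      then have "sup s t \<le> t" using t unfolding is_sup_in_def by blast
      then show ?thesis by (simp add: le_sup_iff)
    next
      case False
      then have "s = x" using sa[OF sA] ax by auto
      then show ?thesis using sF[OF sA] t unfolding is_sup_in_def by blast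
    qed
    then have "a \<le> t" using aA t unfolding is_sup_in_def by blast
    then have ne: "{y\<in>F x. a \<le> y} \<noteq> {}" using t unfolding is_sup_in_def by blast
    obtain c where c: "is_inf_in (F x) {y\<in>F x. a \<le> y} c"
      using csoD[of "F x" "{y\<in>F x. a \<le> y}"] cF[of x] ne by blast
    have "s \<le> c" if sA: "s \<in> A" for s
    proof (cases "s < x")
      case True
      have m: "sup s c \<in> F x" using up True sF[OF sA] c unfolding upper_V_ascending_def is_inf_in_def by blast
      have "\<forall>y\<in>{y\<in>F x. a \<le> y}. sup s c \<le> y"
        using c sa[OF sA] unfolding is_inf_in_def by (auto intro: order_trans)
      then have "sup s c \<le> c" using m c unfolding is_inf_in_def by blast
      then show ?thesis by (simp add: le_sup_iff)
    next
      case False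
      then have sx: "s = x" using sa[OF sA] ax by auto
      then have "a = x" using sa[OF sA] ax by auto
      then have "x \<le> c" using c sF[OF sA] sx unfolding is_inf_in_def by blast
      then show ?thesis using sx by simp
    qed
    then have "a \<le> c" using aA c unfolding is_sup_in_def is_inf_in_def by blast
    then show ?thesis using c unfolding is_inf_in_def by auto
  qed
  define k where "k x = (SOME c. c \<in> F x \<and> a \<le> c \<and> (\<forall>y\<in>F x. a \<le> y \<longrightarrow> c \<le> y))" for x
  have kp: "k x \<in> F x \<and> a \<le> k x \<and> (\<forall>y\<in>F x. a \<le> y \<longrightarrow> k x \<le> y)" if "a \<le> x" for x
    unfolding k_def using someI_ex[OF G[OF that]] .
  have km: "k x \<le> k x'" if "a \<le> x" "x \<le> x'" for x x'
  proof (cases "x = x'")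
    case False
    then have "x < x'" using that by auto
    then have "inf (k x) (k x') \<in> F x" using low kp that unfolding lower_V_ascending_def
      by (meson order_trans)
    moreover have "a \<le> inf (k x) (k x')" using kp that by (meson le_inf_iff order_trans)
    ultimately have "k x \<le> inf (k x) (k x')" using kp[OF that(1)] by blast
    then show ?thesis by (simp add: le_inf_iff)
  qed simp
  define D where "D = {x. a \<le> x \<and> k x \<le> x}"
  obtain T where T: "is_sup_in (UNIV::'a set) UNIV T" using cU unfolding complete_sublattice_order_def by blast
  have "T \<in> D" using T kp unfolding D_def is_sup_in_def by auto
  then obtain p where p: "is_inf_in UNIV D p" using cU unfolding complete_sublattice_order_def by blast
  have ap: "a \<le> p" using p unfolding is_inf_in_def D_def by auto
  have "\<forall>x\<in>D. k p \<le> x"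
  proof
    fix x assume "x \<in> D"
    then have "p \<le> x" "k x \<le> x" using p unfolding is_inf_in_def D_def by auto
    then show "k p \<le> x" using km[OF ap] by (meson order_trans)
  qed
  then have kpp: "k p \<le> p" using p unfolding is_inf_in_def by blast
  have "k (k p) \<le> k p" using km[OF _ kpp] kp[OF ap] by blast
  then have "k p \<in> D" using kp[OF ap] unfolding D_def by auto
  then have "p \<le> k p" using p unfolding is_inf_in_def by blast
  then have "k p = p" using kpp by simp
  then have pF: "p \<in> Fix F" using kp[OF ap] unfolding Fix_def by auto
  have "is_sup_in (Fix F) A p"
    unfolding is_sup_in_def
  proof (intro conjI ballI impI)
    show "p \<in> Fix F" by (rule pF)
    fix s assume "s \<in> A" then show "s \<le> p" using sa ap by (meson order_trans)
  next
    fix u assume uF: "u \<in> Fix F" and ub: "\<forall>s\<in>A. s \<le> u"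
    then have au: "a \<le> u" using aA unfolding is_sup_in_def by blast
    have "k u \<le> u" using kp[OF au] uF au unfolding Fix_def by auto
    then have "u \<in> D" using au unfolding D_def by auto
    then show "p \<le> u" using p unfolding is_inf_in_def by blast
  qed
  then show ?thesis by blast
qed

lemma inf_part:
  fixes F :: "'a::lattice \<Rightarrow> 'a set"
  assumes cU: "complete_sublattice_order (UNIV :: 'a set)"
    and up: "upper_V_ascending F" and low: "lower_V_ascending F"
    and cF: "\<And>x. F x \<noteq> {} \<and> complete_sublattice_order (F x)"
    and AF: "A \<subseteq> Fix F" and aA: "is_inf_in UNIV A a"
  shows "\<exists>s. is_inf_in (Fix F) A s"
proof -
  have sa: "\<And>s. s \<in> A \<Longrightarrow> a \<le> s" using aA unfolding is_inf_in_def by auto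
  have sF: "\<And>s. s \<in> A \<Longrightarrow> s \<in> F s" using AF unfolding Fix_def by auto
  have G: "\<exists>c. c \<in> F x \<and> c \<le> a \<and> (\<forall>y\<in>F x. y \<le> a \<longrightarrow> y \<le> c)" if ax: "x \<le> a" for x
  proof -
    obtain t where t: "is_inf_in (F x) (F x) t"
      using cF[of x] unfolding complete_sublattice_order_def by blast
    have "t \<le> s" if sA: "s \<in> A" for s
    proof (cases "x < s")
      case True
      have "inf t s \<in> F x" using low True sF[OF sA] t unfolding lower_V_ascending_def is_inf_in_def by blast
      then have "t \<le> inf t s" using t unfolding is_inf_in_def by blast
      then show ?thesis by (simp add: le_inf_iff)
    next
      case False
      then have "s = x" using sa[OF sA] ax by auto
      then show ?thesis using sF[OF sA] t unfolding is_inf_in_def by blast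
    qed
    then have "t \<le> a" using aA t unfolding is_inf_in_def by blast
    then have ne: "{y\<in>F x. y \<le> a} \<noteq> {}" using t unfolding is_inf_in_def by blast
    obtain c where c: "is_sup_in (F x) {y\<in>F x. y \<le> a} c"
      using csoD[of "F x" "{y\<in>F x. y \<le> a}"] cF[of x] ne by blast
    have "c \<le> s" if sA: "s \<in> A" for s
    proof (cases "x < s")
      case True
      have m: "inf c s \<in> F x" using low True sF[OF sA] c unfolding lower_V_ascending_def is_sup_in_def by blast
      have "\<forall>y\<in>{y\<in>F x. y \<le> a}. y \<le> inf c s"
        using c sa[OF sA] unfolding is_sup_in_def by (auto intro: order_trans)
      then have "c \<le> inf c s" using m c unfolding is_sup_in_def by blast
      then show ?thesis by (simp add: le_inf_iff)
    next
      case False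
      then have sx: "s = x" using sa[OF sA] ax by auto
      then have "a = x" using sa[OF sA] ax by auto
      then have "c \<le> x" using c sF[OF sA] sx unfolding is_sup_in_def by blast
      then show ?thesis using sx by simp
    qed
    then have "c \<le> a" using aA c unfolding is_sup_in_def is_inf_in_def by blast
    then show ?thesis using c unfolding is_sup_in_def by auto
  qed
  define k where "k x = (SOME c. c \<in> F x \<and> c \<le> a \<and> (\<forall>y\<in>F x. y \<le> a \<longrightarrow> y \<le> c))" for x
  have kp: "k x \<in> F x \<and> k x \<le> a \<and> (\<forall>y\<in>F x. y \<le> a \<longrightarrow> y \<le> k x)" if "x \<le> a" for x
    unfolding k_def using someI_ex[OF G[OF that]] .
  have km: "k x \<le> k x'" if "x' \<le> a" "x \<le> x'" for x x'
  proof (cases "x = x'")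
    case False
    then have "x < x'" using that by auto
    then have "sup (k x) (k x') \<in> F x'" using up kp that unfolding upper_V_ascending_def
      by (meson order_trans)
    moreover have "sup (k x) (k x') \<le> a" using kp that by (meson le_sup_iff order_trans)
    ultimately have "sup (k x) (k x') \<le> k x'" using kp[OF that(1)] by blast
    then show ?thesis by (simp add: le_sup_iff)
  qed simp
  define D where "D = {x. x \<le> a \<and> x \<le> k x}"
  obtain T where T: "is_inf_in (UNIV::'a set) UNIV T" using cU unfolding complete_sublattice_order_def by blast
  have "T \<in> D" using T kp unfolding D_def is_inf_in_def by auto
  then obtain p where p: "is_sup_in UNIV D p" using cU unfolding complete_sublattice_order_def by blast
  have ap: "p \<le> a" using p unfolding is_sup_in_def D_def by auto
  have "\<forall>x\<in>D. x \<le> k p"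
  proof
    fix x assume "x \<in> D"
    then have "x \<le> p" "x \<le> k x" using p unfolding is_sup_in_def D_def by auto
    then show "x \<le> k p" using km[OF ap] by (meson order_trans)
  qed
  then have kpp: "p \<le> k p" using p unfolding is_sup_in_def by blast
  have "k p \<le> k (k p)" using km[OF _ kpp] kp[OF ap] by blast
  then have "k p \<in> D" using kp[OF ap] unfolding D_def by auto
  then have "k p \<le> p" using p unfolding is_sup_in_def by blast
  then have "k p = p" using kpp by simp
  then have pF: "p \<in> Fix F" using kp[OF ap] unfolding Fix_def by auto
  have "is_inf_in (Fix F) A p"
    unfolding is_inf_in_def
  proof (intro conjI ballI impI)
    show "p \<in> Fix F" by (rule pF)
    fix s assume "s \<in> A" then show "p \<le> s" using sa ap by (meson order_trans)
  next
    fix u assume uF: "u \<in> Fix F" and ub: "\<forall>s\<in>A. u \<le> s"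
    then have au: "u \<le> a" using aA unfolding is_inf_in_def by blast
    have "u \<le> k u" using kp[OF au] uF au unfolding Fix_def by auto
    then have "u \<in> D" using au unfolding D_def by auto
    then show "u \<le> p" using p unfolding is_sup_in_def by blast
  qed
  then show ?thesis by blast
qed

theorem theorem1p3:
  fixes F :: "'a::lattice \<Rightarrow> 'a set"
  assumes "complete_sublattice_order (UNIV :: 'a set)"
    and "V_ascending F"
    and "\<And>x. F x \<noteq> {} \<and> complete_sublattice_order (F x)"
  shows "Fix F \<noteq> {} \<and> complete_sublattice_order (Fix F)"
proof -
  have up: "upper_V_ascending F" and low: "lower_V_ascending F"
    using assms(2) unfolding V_ascending_def by auto
  obtain b where b: "is_inf_in (UNIV::'a set) UNIV b"
    using assms(1) unfolding complete_sublattice_order_def by blast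
  have "is_sup_in UNIV {} b" using b unfolding is_sup_in_def is_inf_in_def by auto
  then obtain s where "is_sup_in (Fix F) {} s"
    using sup_part[OF assms(1) up low assms(3)] by blast
  then have ne: "Fix F \<noteq> {}" unfolding is_sup_in_def by auto
  have "complete_sublattice_order (Fix F)"
    unfolding complete_sublattice_order_def
  proof (intro allI impI conjI)
    fix A assume A: "A \<subseteq> Fix F \<and> A \<noteq> {}"
    obtain a where "is_sup_in UNIV A a"
      using assms(1) A unfolding complete_sublattice_order_def by blast
    then show "\<exists>s. is_sup_in (Fix F) A s"
      using sup_part[OF assms(1) up low assms(3)] A by blast
    obtain a' where "is_inf_in UNIV A a'"
      using assms(1) A unfolding complete_sublattice_order_def by blast
    then show "\<exists>s. is_inf_in (Fix F) A s"
      using inf_part[OF assms(1) up low assms(3)] A by blast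
  qed
  then show ?thesis using ne by blast
qed

end
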